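(* Let $n\ge1$, $s\in[\frac12,1)$, and let $K:\mathbb{R}^n\times\mathbb{R}^n\to[0,+\infty]$ be measurable with $\frac{c\,\chi_{[0,\varrho)}(|x-z|)}{|x-z|^{n+2s}}\le K(x,z)\le\frac{C}{|x-z|^{n+2s}}$ for some $c,C\in(0,+\infty)$, $\varrho\in(0,+\infty]$, and assume $$C_\sharp:=\sup_{x\in\mathbb{R}^n}\int_{B_1}|y|\,|K(x,x+y)-K(x,x-y)|\,dy<+\infty .$$ Then for every $u\in C^\infty_c(\mathbb{R}^n)$ and every $x\in\mathbb{R}^n$ the limit $$\mathcal L_Ku(x)=\lim_{\varepsilon\searrow0}\int_{\mathbb{R}^n\setminus B_\varepsilon}(u(x)-u(x-y))K(x,x-y)\,dy$$ exists, and $$\|\mathcal L_Ku\|_{L^\infty(\mathbb{R}^n)}\le C_n\|u\|_{C^2(\mathbb{R}^n)}\left(\frac{C}{s(1-s)}+C_\sharp\right),$$ where $C_n>0$ depends only on $n$.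
   Context: $B_r$ is the open ball of radius $r$ centered at $0$; $\chi_{[0,\varrho)}$ is the indicator of $[0,\varrho)$. *)

theory Defs
  imports "HOL-Analysis.Analysis"
begin

definition partial_deriv :: "'n::finite \<Rightarrow> (real^'n \<Rightarrow> real) \<Rightarrow> real^'n \<Rightarrow> real" where
  "partial_deriv i f x = deriv (\<lambda>t. f (x + t *\<^sub>R axis i 1)) 0"

fun dparts :: "'n::finite list \<Rightarrow> (real^'n \<Rightarrow> real) \<Rightarrow> real^'n \<Rightarrow> real" where
  "dparts [] f = f"
| "dparts (i # is) f = partial_deriv i (dparts is f)"

definition smooth :: "(real^'n::finite \<Rightarrow> real) \<Rightarrow> bool" where
  "smooth f \<longleftrightarrow> (\<forall>is. continuous_on UNIV (dparts is f) \<and>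
      (\<forall>i x. (\<lambda>t. dparts is f (x + t *\<^sub>R axis i 1)) differentiable (at 0)))"

definition smooth_compact_support :: "(real^'n::finite \<Rightarrow> real) \<Rightarrow> bool" where
  "smooth_compact_support u \<longleftrightarrow> smooth u \<and> compact (closure {x. u x \<noteq> 0})"

definition C2_norm :: "(real^'n::finite \<Rightarrow> real) \<Rightarrow> real" where
  "C2_norm u = (SUP x. \<bar>u x\<bar>) + (\<Sum>i\<in>UNIV. SUP x. \<bar>partial_deriv i u x\<bar>)
     + (\<Sum>i\<in>UNIV. \<Sum>j\<in>UNIV. SUP x. \<bar>partial_deriv i (partial_deriv j u) x\<bar>)"

definition C_sharp :: "(real^'n::finite \<Rightarrow> real^'n \<Rightarrow> ennreal) \<Rightarrow> ennreal" where
  "C_sharp K = (SUP x. \<integral>\<^sup>+ y \<in> ball 0 1. ennreal (norm y *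
       \<bar>enn2real (K x (x + y)) - enn2real (K x (x - y))\<bar>) \<partial>lborel)"

definition trunc_op :: "(real^'n::finite \<Rightarrow> real^'n \<Rightarrow> ennreal) \<Rightarrow> (real^'n \<Rightarrow> real) \<Rightarrow> real^'n \<Rightarrow> real \<Rightarrow> real" where
  "trunc_op K u x \<epsilon> = (LINT y : - ball 0 \<epsilon> | lborel. (u x - u (x - y)) * enn2real (K x (x - y)))"

end

theory Submission
  imports Defs
begin

lemma annulus_bound:
  fixes b \<rho> :: real
  assumes b: "0 \<le> b" and r: "0 < \<rho>"
  shows "(\<integral>\<^sup>+y. indicator {y::'a::euclidean_space. \<rho> \<le> norm y \<and> norm y \<le> 2*\<rho>} y * ennreal (norm y powr (-b)) \<partial>lborel)
     \<le> ennreal (unit_ball_vol DIM('a) * 2^DIM('a) * \<rho> powr (DIM('a) - b))"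
proof -
  have "(\<integral>\<^sup>+y. indicator {y::'a. \<rho> \<le> norm y \<and> norm y \<le> 2*\<rho>} y * ennreal (norm y powr (-b)) \<partial>lborel)
     \<le> (\<integral>\<^sup>+y. ennreal (\<rho> powr (-b)) * indicator (cball (0::'a) (2*\<rho>)) y \<partial>lborel)"
  proof (rule nn_integral_mono)
    fix y :: 'a
    show "indicator {y::'a. \<rho> \<le> norm y \<and> norm y \<le> 2*\<rho>} y * ennreal (norm y powr (-b))
      \<le> ennreal (\<rho> powr (-b)) * indicator (cball 0 (2*\<rho>)) y"
    proof (cases "\<rho> \<le> norm y \<and> norm y \<le> 2*\<rho>")
      case True
      then have "norm y powr (-b) \<le> \<rho> powr (-b)"
        using b r by (intro powr_mono2') auto
      then show ?thesis using True by (simp add: indicator_def)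
    qed (simp add: indicator_def)
  qed
  also have "\<dots> = ennreal (\<rho> powr (-b)) * emeasure lborel (cball (0::'a) (2*\<rho>))"
    by (rule nn_integral_cmult_indicator) simp
  also have "\<dots> = ennreal (\<rho> powr (-b)) * ennreal (unit_ball_vol DIM('a) * (2*\<rho>) ^ DIM('a))"
    using r by (subst emeasure_cball) auto
  also have "\<dots> = ennreal (\<rho> powr (-b) * (unit_ball_vol DIM('a) * (2*\<rho>) ^ DIM('a)))"
    by (rule ennreal_mult[symmetric]) (use r in auto)
  also have "\<rho> powr (-b) * (unit_ball_vol DIM('a) * (2*\<rho>) ^ DIM('a)) = unit_ball_vol DIM('a) * 2^DIM('a) * \<rho> powr (DIM('a) - b)"
  proof -
    have "(2*\<rho>) ^ DIM('a) = 2^DIM('a) * \<rho> powr (real DIM('a))"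
      using r by (simp add: power_mult_distrib powr_realpow)
    moreover have "\<rho> powr (-b) * \<rho> powr (real DIM('a)) = \<rho> powr (DIM('a) - b)"
      by (simp add: powr_add[symmetric])
    ultimately show ?thesis by (simp add: algebra_simps)
  qed
  finally show ?thesis .
qed

lemma dyadic_inner:
  fixes r :: real
  shows "(1/2)^n \<le> r \<Longrightarrow> r \<le> 1 \<Longrightarrow> \<exists>k::nat. (1/2)^(k+1) \<le> r \<and> r \<le> 2*(1/2)^(k+1)"
proof (induction n arbitrary: r)
  case 0
  then show ?case by (intro exI[of _ 0]) auto
next
  case (Suc n)
  show ?case
  proof (cases "1/2 \<le> r")
    case True
    then show ?thesis using Suc.prems by (intro exI[of _ 0]) auto
  next
    case False
    have "(1/2)^n \<le> 2*r" using Suc.prems by simp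
    moreover have "2*r \<le> 1" using False by simp
    ultimately obtain k::nat where k: "(1/2)^(k+1) \<le> 2*r" "2*r \<le> 2*(1/2)^(k+1)"
      using Suc.IH by blast
    show ?thesis using k by (intro exI[of _ "k+1"]) auto
  qed
qed

lemma dyadic_outer:
  fixes r :: real
  shows "r \<le> 2^n \<Longrightarrow> 1 \<le> r \<Longrightarrow> \<exists>k::nat. 2^k \<le> r \<and> r \<le> 2*2^k"
proof (induction n arbitrary: r)
  case 0
  then show ?case by (intro exI[of _ 0]) auto
next
  case (Suc n)
  show ?case
  proof (cases "r \<le> 2")
    case True
    then show ?thesis using Suc.prems by (intro exI[of _ 0]) auto
  next
    case False
    have "r/2 \<le> 2^n" using Suc.prems by simp
    moreover have "1 \<le> r/2" using False by simp
    ultimately obtain k::nat where k: "2^k \<le> r/2" "r/2 \<le> 2*2^k"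
      using Suc.IH by blast
    show ?thesis using k by (intro exI[of _ "k+1"]) auto
  qed
qed

lemma dyadic_sum_bound:
  fixes b q :: real and \<rho> :: "nat \<Rightarrow> real" and S :: "'a::euclidean_space set"
  assumes b: "0 \<le> b" and q: "0 \<le> q" "q < 1" and \<rho>pos: "\<And>k. 0 < \<rho> k"
    and \<rho>q: "\<And>k. \<rho> k powr (DIM('a) - b) \<le> q^k"
    and cover: "\<And>y. y \<in> S \<Longrightarrow> y \<noteq> 0 \<Longrightarrow> \<exists>k. \<rho> k \<le> norm y \<and> norm y \<le> 2 * \<rho> k"
  shows "(\<integral>\<^sup>+y. indicator S y * ennreal (norm y powr (-b)) \<partial>lborel)
     \<le> ennreal (unit_ball_vol DIM('a) * 2^DIM('a) / (1 - q))"
proof -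
  define A where "A k = {y::'a. \<rho> k \<le> norm y \<and> norm y \<le> 2 * \<rho> k}" for k
  define V where "V = unit_ball_vol DIM('a) * 2^DIM('a)"
  have V: "0 \<le> V" unfolding V_def by simp
  have "(\<integral>\<^sup>+y. indicator S y * ennreal (norm y powr (-b)) \<partial>lborel)
     \<le> (\<integral>\<^sup>+y. (\<Sum>k. indicator (A k) y * ennreal (norm y powr (-b))) \<partial>lborel)"
  proof (rule nn_integral_mono)
    fix y :: 'a
    show "indicator S y * ennreal (norm y powr (-b)) \<le> (\<Sum>k. indicator (A k) y * ennreal (norm y powr (-b)))"
    proof (cases "y \<in> S \<and> y \<noteq> 0")
      case True
      then obtain k where k: "y \<in> A k" using cover unfolding A_def by blast
      have "indicator S y * ennreal (norm y powr (-b)) = indicator (A k) y * ennreal (norm y powr (-b))"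
        using k True by (simp add: indicator_def)
      also have "\<dots> \<le> (\<Sum>k. indicator (A k) y * ennreal (norm y powr (-b)))"
      proof -
        define F where "F = (\<lambda>k. indicator (A k) y * ennreal (norm y powr (-b)))"
        have "sum F {k} \<le> suminf F" by (rule sum_le_suminf[OF summableI]) auto
        then have "F k \<le> suminf F" by simp
        then show ?thesis unfolding F_def .
      qed
      finally show ?thesis .
    next
      case False
      then show ?thesis by (auto simp: indicator_def)
    qed
  qed
  also have "\<dots> = (\<Sum>k. \<integral>\<^sup>+y. indicator (A k) y * ennreal (norm y powr (-b)) \<partial>lborel)"
    unfolding A_def by (rule nn_integral_suminf) measurable
  also have "\<dots> \<le> (\<Sum>k. ennreal (V * q^k))"
  proof (intro suminf_le summableI)
    fix k
    have "(\<integral>\<^sup>+y. indicator (A k) y * ennreal (norm y powr (-b)) \<partial>lborel) \<le> ennreal (V * \<rho> k powr (DIM('a) - b))"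
      unfolding A_def V_def using annulus_bound[OF b \<rho>pos[of k]] by simp
    also have "\<dots> \<le> ennreal (V * q^k)"
      using \<rho>q[of k] V by (intro ennreal_leI mult_left_mono) auto
    finally show "(\<integral>\<^sup>+y. indicator (A k) y * ennreal (norm y powr (-b)) \<partial>lborel) \<le> ennreal (V * q^k)" .
  qed
  also have "\<dots> = ennreal (\<Sum>k. V * q^k)"
    using q V by (intro suminf_ennreal2) (auto intro!: summable_mult summable_geometric)
  also have "(\<Sum>k. V * q^k) = V / (1 - q)"
    using q by (simp add: suminf_mult summable_geometric suminf_geometric)
  finally show ?thesis unfolding V_def .
qed

lemma two_powr_nat: "((2::real)^k) powr t = (2 powr t)^k"
proof -
  have "((2::real)^k) powr t = (2 powr real k) powr t" by (simp add: powr_realpow)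
  also have "\<dots> = 2 powr (t * real k)" by (simp add: powr_powr mult.commute)
  also have "\<dots> = (2 powr t) powr real k" by (simp add: powr_powr)
  also have "\<dots> = (2 powr t)^k" by (simp add: powr_realpow)
  finally show ?thesis .
qed

lemma geo_const:
  fixes t :: real assumes "0 < t" "t \<le> 1"
  shows "t/4 \<le> 1 - 2 powr (-t)"
proof -
  have l1: "1/2 \<le> ln (2::real)"
    using exp_half_le2 by (metis ln_exp ln_le_cancel_iff exp_gt_zero less_le_trans zero_less_two order_refl)
  have l2: "ln (2::real) \<le> 1"
    using exp_ge_add_one_self[of "1::real"] by (metis ln_exp ln_le_cancel_iff exp_gt_zero one_add_one zero_less_two)
  define z where "z = t * ln 2"
  have z: "0 < z" "z \<le> 1" "t/2 \<le> z" unfolding z_def using assms l1 l2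
    by (auto intro: mult_le_one)
  have "2 powr (-t) = exp (- z)" unfolding z_def powr_def by simp
  also have "\<dots> = 1 / exp z" by (simp add: exp_minus field_simps)
  also have "\<dots> \<le> 1 / (1 + z)"
    using z by (intro divide_left_mono) auto
  finally have "2 powr (-t) \<le> 1 / (1 + z)" .
  moreover have "1 - 1/(1+z) = z/(1+z)" using z by (simp add: field_simps)
  moreover have "z/(1+z) \<ge> z/2" using z by (intro divide_left_mono) auto
  ultimately show ?thesis using z by linarith
qed

lemma inner_integral:
  fixes b :: real
  assumes b: "0 \<le> b" "b < DIM('a)"
  shows "(\<integral>\<^sup>+y. indicator (ball (0::'a::euclidean_space) 1) y * ennreal (norm y powr (-b)) \<partial>lborel)
     \<le> ennreal (unit_ball_vol DIM('a) * 2^DIM('a) / (1 - 2 powr (b - DIM('a))))"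
proof (rule dyadic_sum_bound[OF b(1), where \<rho>="\<lambda>k. (1/2)^(k+1)"])
  show "0 \<le> 2 powr (b - DIM('a))" by simp
  have "2 powr (b - DIM('a)) < 2 powr 0" by (rule powr_less_mono) (use b in auto)
  then show q1: "2 powr (b - DIM('a)) < 1" by simp
  show "0 < (1/2::real)^(k+1)" for k by simp
  show "((1/2::real)^(k+1)) powr (DIM('a) - b) \<le> (2 powr (b - DIM('a)))^k" for k
  proof -
    have "((1/2::real)^(k+1)) = 1 / 2^(k+1)" by (simp add: power_one_over)
    then have "((1/2::real)^(k+1)) powr (DIM('a) - b) = 1 / ((2^(k+1)) powr (DIM('a) - b))"
      by (simp add: powr_divide)
    also have "\<dots> = 1 / ((2 powr (DIM('a) - b))^(k+1))" using two_powr_nat[of "k+1"] by simp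
    also have "\<dots> = (1 / 2 powr (DIM('a) - b))^(k+1)" by (simp add: power_one_over)
    also have "\<dots> = (2 powr (b - DIM('a)))^(k+1)"
      by (simp add: powr_minus_divide[symmetric])
    also have "\<dots> \<le> (2 powr (b - DIM('a)))^k"
      using q1 by (intro power_decreasing) auto
    finally show ?thesis .
  qed
  fix y :: 'a assume y: "y \<in> ball 0 1" "y \<noteq> 0"
  then have r: "0 < norm y" "norm y \<le> 1" by auto
  obtain n where "(1/2::real)^n < norm y" using real_arch_pow_inv[OF r(1), of "1/2"] by auto
  then obtain k::nat where "(1/2)^(k+1) \<le> norm y \<and> norm y \<le> 2*(1/2)^(k+1)"
    using dyadic_inner[of n "norm y"] r by auto
  then show "\<exists>k. (1/2::real)^(k+1) \<le> norm y \<and> norm y \<le> 2 * (1/2)^(k+1)" by blast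
qed

lemma outer_integral:
  fixes a :: real
  assumes a: "DIM('a) < a"
  shows "(\<integral>\<^sup>+y. indicator (- ball (0::'a::euclidean_space) 1) y * ennreal (norm y powr (-a)) \<partial>lborel)
     \<le> ennreal (unit_ball_vol DIM('a) * 2^DIM('a) / (1 - 2 powr (DIM('a) - a)))"
proof (rule dyadic_sum_bound[where \<rho>="\<lambda>k. 2^k"])
  show "0 \<le> a" using a by linarith
  show "0 \<le> 2 powr (DIM('a) - a)" by simp
  have "2 powr (DIM('a) - a) < 2 powr 0" by (rule powr_less_mono) (use a in auto)
  then show q1: "2 powr (DIM('a) - a) < 1" by simp
  show "0 < (2::real)^k" for k by simp
  show "((2::real)^k) powr (DIM('a) - a) \<le> (2 powr (DIM('a) - a))^k" for k
    by (simp add: two_powr_nat)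
  fix y :: 'a assume y: "y \<in> - ball 0 1" "y \<noteq> 0"
  then have r: "1 \<le> norm y" by auto
  obtain n where "norm y < (2::real)^n" using real_arch_pow[of 2 "norm y"] by auto
  then obtain k::nat where "2^k \<le> norm y \<and> norm y \<le> 2*2^k"
    using dyadic_outer[of "norm y" n] r by auto
  then show "\<exists>k. (2::real)^k \<le> norm y \<and> norm y \<le> 2 * 2^k" by blast
qed

lemma mvt_any:
  fixes \<phi> \<phi>' :: "real \<Rightarrow> real"
  assumes d: "\<And>t. DERIV \<phi> t :> \<phi>' t"
  shows "\<exists>z. \<bar>z\<bar> \<le> \<bar>t\<bar> \<and> \<phi> t - \<phi> 0 = t * \<phi>' z"
proof (cases "t = 0")
  case True then show ?thesis by (intro exI[of _ 0]) auto
next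
  case False
  show ?thesis
  proof (cases "0 < t")
    case True
    from MVT2[OF True d] obtain z where "0 < z" "z < t" "\<phi> t - \<phi> 0 = (t - 0) * \<phi>' z" by blast
    then show ?thesis by (intro exI[of _ z]) auto
  next
    case False
    with \<open>t \<noteq> 0\<close> have "t < 0" by simp
    from MVT2[OF this d] obtain z where "t < z" "z < 0" "\<phi> 0 - \<phi> t = (0 - t) * \<phi>' z" by blast
    then show ?thesis by (intro exI[of _ z]) (auto simp: algebra_simps)
  qed
qed

lemma mvt_bound:
  fixes \<phi> \<phi>' :: "real \<Rightarrow> real"
  assumes d: "\<And>t. DERIV \<phi> t :> \<phi>' t" and b: "\<And>t. \<bar>\<phi>' t\<bar> \<le> B"
  shows "\<bar>\<phi> t - \<phi> 0\<bar> \<le> B * \<bar>t\<bar>"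
proof -
  obtain z where z: "\<phi> t - \<phi> 0 = t * \<phi>' z" using mvt_any[OF d, of t] by blast
  have "\<bar>t * \<phi>' z\<bar> = \<bar>t\<bar> * \<bar>\<phi>' z\<bar>" by (simp add: abs_mult)
  also have "\<dots> \<le> \<bar>t\<bar> * B" by (intro mult_left_mono b) auto
  finally show ?thesis using z by (simp add: mult.commute)
qed

lemma taylor_bound:
  fixes \<phi> \<phi>' \<phi>'' :: "real \<Rightarrow> real"
  assumes d1: "\<And>t. DERIV \<phi> t :> \<phi>' t" and d2: "\<And>t. DERIV \<phi>' t :> \<phi>'' t"
    and b: "\<And>t. \<bar>\<phi>'' t\<bar> \<le> B"
  shows "\<bar>\<phi> t - \<phi> 0 - \<phi>' 0 * t\<bar> \<le> B * t^2"
proof -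
  obtain z where z: "\<bar>z\<bar> \<le> \<bar>t\<bar>" "\<phi> t - \<phi> 0 = t * \<phi>' z" using mvt_any[OF d1, of t] by blast
  have B: "0 \<le> B" using b[of 0] by linarith
  have "\<bar>\<phi>' z - \<phi>' 0\<bar> \<le> B * \<bar>z\<bar>" by (rule mvt_bound[OF d2 b])
  also have "\<dots> \<le> B * \<bar>t\<bar>" using z B by (intro mult_left_mono) auto
  finally have *: "\<bar>\<phi>' z - \<phi>' 0\<bar> \<le> B * \<bar>t\<bar>" .
  have "\<phi> t - \<phi> 0 - \<phi>' 0 * t = t * (\<phi>' z - \<phi>' 0)" using z by (simp add: algebra_simps)
  then have "\<bar>\<phi> t - \<phi> 0 - \<phi>' 0 * t\<bar> = \<bar>t\<bar> * \<bar>\<phi>' z - \<phi>' 0\<bar>" by (simp add: abs_mult)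
  also have "\<dots> \<le> \<bar>t\<bar> * (B * \<bar>t\<bar>)" by (intro mult_left_mono *) auto
  also have "\<dots> = B * t^2" by (simp add: power2_eq_square abs_mult_self algebra_simps)
  finally show ?thesis .
qed

lemma pd_deriv:
  fixes f :: "real^'n::finite \<Rightarrow> real"
  assumes d: "\<And>x. (\<lambda>t. f (x + t *\<^sub>R axis i 1)) differentiable (at 0)"
  shows "((\<lambda>t. f (p + t *\<^sub>R axis i 1)) has_real_derivative partial_deriv i f (p + t0 *\<^sub>R axis i 1)) (at t0)"
proof -
  define q where "q = p + t0 *\<^sub>R axis i 1"
  define g where "g = (\<lambda>t. f (q + t *\<^sub>R axis i 1))"
  have "(g has_real_derivative deriv g 0) (at 0)"
    using d[of q] unfolding g_def by (simp add: DERIV_deriv_iff_real_differentiable)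
  then have "(g has_real_derivative partial_deriv i f q) (at (t0 + (- t0)))"
    unfolding g_def partial_deriv_def by simp
  then have "((\<lambda>t. g (t + (- t0))) has_real_derivative partial_deriv i f q) (at t0)"
    by (simp only: DERIV_shift)
  moreover have "(\<lambda>t. g (t + (- t0))) = (\<lambda>t. f (p + t *\<^sub>R axis i 1))"
    unfolding g_def q_def by (auto simp: algebra_simps)
  ultimately show ?thesis unfolding q_def by simp
qed

lemma sum_axis_eq: "(\<Sum>j\<in>UNIV. (y$j) *\<^sub>R axis j (1::real)) = (y::real^'n::finite)"
  by (simp add: vec_eq_iff axis_def if_distrib sum.delta cong: if_cong)

lemma first_order:
  fixes f :: "real^'n::finite \<Rightarrow> real"
  assumes d: "\<And>j x. (\<lambda>t. f (x + t *\<^sub>R axis j 1)) differentiable (at 0)"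
    and b: "\<And>j x. \<bar>partial_deriv j f x\<bar> \<le> B"
  shows "\<bar>f x - f (x - (\<Sum>j\<in>I. (y$j) *\<^sub>R axis j 1))\<bar> \<le> B * card I * norm y"
proof -
  have B: "0 \<le> B" using b[of undefined undefined] by linarith
  have "finite I" by simp
  then show ?thesis
  proof (induction I rule: finite_induct)
    case empty then show ?case by simp
  next
    case (insert k I)
    define z where "z = x - (\<Sum>j\<in>I. (y$j) *\<^sub>R axis j 1)"
    have eq: "x - (\<Sum>j\<in>insert k I. (y$j) *\<^sub>R axis j 1) = z + (- (y$k)) *\<^sub>R axis k 1"
      using insert.hyps unfolding z_def by (simp add: algebra_simps)
    have "\<bar>f z - f (z + (- (y$k)) *\<^sub>R axis k 1)\<bar> = \<bar>(\<lambda>t. f (z + t *\<^sub>R axis k 1)) (- (y$k)) - (\<lambda>t. f (z + t *\<^sub>R axis k 1)) 0\<bar>"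
      by simp
    also have "\<dots> \<le> B * \<bar>- (y$k)\<bar>"
      by (rule mvt_bound[OF pd_deriv[OF d] b])
    also have "\<dots> \<le> B * norm y" using B component_le_norm_cart[of y k] by (intro mult_left_mono) auto
    finally have *: "\<bar>f z - f (z + (- (y$k)) *\<^sub>R axis k 1)\<bar> \<le> B * norm y" .
    have "\<bar>f x - f (x - (\<Sum>j\<in>insert k I. (y$j) *\<^sub>R axis j 1))\<bar> \<le> \<bar>f x - f z\<bar> + \<bar>f z - f (z + (- (y$k)) *\<^sub>R axis k 1)\<bar>"
      unfolding eq by linarith
    also have "\<dots> \<le> B * card I * norm y + B * norm y" using insert.IH * unfolding z_def by linarith
    also have "\<dots> = B * card (insert k I) * norm y" using insert.hyps by (simp add: algebra_simps)
    finally show ?case .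
  qed
qed

lemma second_order:
  fixes u :: "real^'n::finite \<Rightarrow> real"
  assumes d0: "\<And>j x. (\<lambda>t. u (x + t *\<^sub>R axis j 1)) differentiable (at 0)"
    and d1: "\<And>i j x. (\<lambda>t. partial_deriv i u (x + t *\<^sub>R axis j 1)) differentiable (at 0)"
    and b: "\<And>i j x. \<bar>partial_deriv i (partial_deriv j u) x\<bar> \<le> B"
  shows "\<bar>u x - u (x - (\<Sum>j\<in>I. (y$j) *\<^sub>R axis j 1)) - (\<Sum>j\<in>I. partial_deriv j u x * y$j)\<bar>
           \<le> B * (card I)^2 * (norm y)^2"
proof -
  have B: "0 \<le> B" using b[of undefined undefined undefined] by linarith
  have "finite I" by simp
  then show ?thesis
  proof (induction I rule: finite_induct)
    case empty then show ?case by simp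
  next
    case (insert k I)
    define z where "z = x - (\<Sum>j\<in>I. (y$j) *\<^sub>R axis j 1)"
    define c where "c = card I"
    have eq: "x - (\<Sum>j\<in>insert k I. (y$j) *\<^sub>R axis j 1) = z + (- (y$k)) *\<^sub>R axis k 1"
      using insert.hyps unfolding z_def by (simp add: algebra_simps)
    define \<phi> where "\<phi> = (\<lambda>t. u (z + t *\<^sub>R axis k 1))"
    define \<phi>' where "\<phi>' = (\<lambda>t. partial_deriv k u (z + t *\<^sub>R axis k 1))"
    define \<phi>'' where "\<phi>'' = (\<lambda>t. partial_deriv k (partial_deriv k u) (z + t *\<^sub>R axis k 1))"
    have "\<bar>\<phi> (- (y$k)) - \<phi> 0 - \<phi>' 0 * (- (y$k))\<bar> \<le> B * (- (y$k))^2"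
      unfolding \<phi>_def \<phi>'_def \<phi>''_def
      by (rule taylor_bound[OF pd_deriv[OF d0] pd_deriv[OF d1] b])
    also have "\<dots> \<le> B * (norm y)^2"
    proof -
      have "\<bar>- (y$k)\<bar> \<le> \<bar>norm y\<bar>" using component_le_norm_cart[of y k] by simp
      then have "(- (y$k))^2 \<le> (norm y)^2" by (simp only: abs_le_square_iff)
      then show ?thesis using B by (intro mult_left_mono) auto
    qed
    finally have mid: "\<bar>u z - u (z + (- (y$k)) *\<^sub>R axis k 1) - partial_deriv k u z * y$k\<bar> \<le> B * (norm y)^2"
      unfolding \<phi>_def \<phi>'_def by (simp add: abs_minus_commute algebra_simps)
    have fo: "\<bar>partial_deriv k u x - partial_deriv k u z\<bar> \<le> B * c * norm y"
      unfolding z_def c_def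
      by (rule first_order[OF _ b]) (rule d1)
    have "\<bar>(partial_deriv k u z - partial_deriv k u x) * y$k\<bar> = \<bar>partial_deriv k u x - partial_deriv k u z\<bar> * \<bar>y$k\<bar>"
      by (simp add: abs_mult abs_minus_commute)
    also have "\<dots> \<le> (B * c * norm y) * norm y"
      using fo component_le_norm_cart[of y k] by (intro mult_mono) auto
    finally have third: "\<bar>(partial_deriv k u z - partial_deriv k u x) * y$k\<bar> \<le> B * c * (norm y)^2"
      by (simp add: power2_eq_square algebra_simps)
    have split: "u x - u (x - (\<Sum>j\<in>insert k I. (y$j) *\<^sub>R axis j 1)) - (\<Sum>j\<in>insert k I. partial_deriv j u x * y$j)
      = (u x - u z - (\<Sum>j\<in>I. partial_deriv j u x * y$j))
        + (u z - u (z + (- (y$k)) *\<^sub>R axis k 1) - partial_deriv k u z * y$k)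
        + (partial_deriv k u z - partial_deriv k u x) * y$k"
      unfolding eq using insert.hyps by (simp add: algebra_simps)
    have "\<bar>u x - u (x - (\<Sum>j\<in>insert k I. (y$j) *\<^sub>R axis j 1)) - (\<Sum>j\<in>insert k I. partial_deriv j u x * y$j)\<bar>
       \<le> B * c^2 * (norm y)^2 + B * (norm y)^2 + B * c * (norm y)^2"
      unfolding split using insert.IH mid third unfolding z_def c_def by linarith
    also have "\<dots> \<le> B * (c+1)^2 * (norm y)^2"
    proof -
      have "B * c^2 * (norm y)^2 + B * (norm y)^2 + B * c * (norm y)^2 = (B * (norm y)^2) * (c^2 + c + 1)"
        by (simp add: algebra_simps)
      also have "\<dots> \<le> (B * (norm y)^2) * ((c+1)^2)"
        using B by (intro mult_left_mono) (auto simp: power2_eq_square algebra_simps)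
      finally show ?thesis by (simp add: algebra_simps)
    qed
    also have "\<dots> = B * (card (insert k I))^2 * (norm y)^2" using insert.hyps unfolding c_def by simp
    finally show ?case .
  qed
qed

lemma pd_zero_open:
  fixes f :: "real^'n::finite \<Rightarrow> real"
  assumes U: "open U" "\<And>x. x \<in> U \<Longrightarrow> f x = 0" and p: "p \<in> U"
  shows "partial_deriv i f p = 0"
proof -
  obtain e where e: "0 < e" "ball p e \<subseteq> U" using U(1) p open_contains_ball by blast
  have "((\<lambda>t. f (p + t *\<^sub>R axis i 1)) has_real_derivative 0) (at 0)"
  proof (rule has_field_derivative_transform_within_open[where f="\<lambda>_. 0" and S="ball 0 e"])
    show "((\<lambda>_. 0) has_real_derivative 0) (at 0)" by simp
    show "open (ball (0::real) e)" by simp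
    show "(0::real) \<in> ball 0 e" using e by simp
    fix t :: real assume "t \<in> ball 0 e"
    then have "p + t *\<^sub>R axis i 1 \<in> ball p e" by (simp add: dist_norm)
    then show "0 = f (p + t *\<^sub>R axis i 1)" using e U(2) by auto
  qed
  then show ?thesis unfolding partial_deriv_def by (rule DERIV_imp_deriv)
qed

lemma bdd_supp:
  fixes g :: "real^'n::finite \<Rightarrow> real"
  assumes g: "continuous_on UNIV g" and S: "compact S" and z: "\<And>x. x \<notin> S \<Longrightarrow> g x = 0"
  shows "bdd_above (range (\<lambda>x. \<bar>g x\<bar>))"
proof -
  have "compact (g ` S)" using S g by (intro compact_continuous_image continuous_on_subset[OF g]) auto
  then obtain M where M: "\<And>x. x \<in> S \<Longrightarrow> norm (g x) \<le> M"
    using compact_imp_bounded[of "g ` S"] unfolding bounded_iff by auto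
  show ?thesis
  proof (rule bdd_aboveI[where M="max M 0"])
    fix r assume "r \<in> range (\<lambda>x. \<bar>g x\<bar>)"
    then obtain x where "r = \<bar>g x\<bar>" by auto
    then show "r \<le> max M 0" using M[of x] z[of x] by (cases "x \<in> S") auto
  qed
qed

lemma sup_upper:
  fixes g :: "'a \<Rightarrow> real"
  assumes "bdd_above (range (\<lambda>x. \<bar>g x\<bar>))" shows "\<bar>g x\<bar> \<le> (SUP x. \<bar>g x\<bar>)"
  by (rule cSUP_upper[OF UNIV_I assms])

lemma sup_nonneg: "bdd_above (range (\<lambda>x. \<bar>g x\<bar>)) \<Longrightarrow> 0 \<le> (SUP x. \<bar>(g x :: real)\<bar>)"
  using sup_upper[of g undefined] by linarith

lemma smooth_facts:
  fixes u :: "real^'n::finite \<Rightarrow> real"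
  assumes "smooth_compact_support u"
  shows "continuous_on UNIV u" "\<And>j. continuous_on UNIV (partial_deriv j u)"
    "\<And>i j. continuous_on UNIV (partial_deriv i (partial_deriv j u))"
    "\<And>j x. (\<lambda>t. u (x + t *\<^sub>R axis j 1)) differentiable (at 0)"
    "\<And>i j x. (\<lambda>t. partial_deriv i u (x + t *\<^sub>R axis j 1)) differentiable (at 0)"
    "bdd_above (range (\<lambda>x. \<bar>u x\<bar>))"
    "\<And>j. bdd_above (range (\<lambda>x. \<bar>partial_deriv j u x\<bar>))"
    "\<And>i j. bdd_above (range (\<lambda>x. \<bar>partial_deriv i (partial_deriv j u) x\<bar>))"
proof -
  have sm: "smooth u" and cpt: "compact (closure {x. u x \<noteq> 0})"
    using assms unfolding smooth_compact_support_def by auto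
  have all: "\<forall>is. continuous_on UNIV (dparts is u) \<and>
      (\<forall>i x. (\<lambda>t. dparts is u (x + t *\<^sub>R axis i 1)) differentiable (at 0))"
    using sm unfolding smooth_def .
  have A: "continuous_on UNIV (dparts is u)" for "is"
    by (rule conjunct1[OF spec[OF all, of "is"]])
  have B: "(\<lambda>t. dparts is u (x + t *\<^sub>R axis i 1)) differentiable (at 0)" for "is" i x
    by (rule conjunct2[OF spec[OF all, of "is"], rule_format])
  show c0: "continuous_on UNIV u" using A[of "[]"] by (simp only: dparts.simps)
  show c1: "continuous_on UNIV (partial_deriv j u)" for j using A[of "[j]"] by (simp only: dparts.simps)
  show c2: "continuous_on UNIV (partial_deriv i (partial_deriv j u))" for i j
    using A[of "[i,j]"] by (simp only: dparts.simps)
  show "(\<lambda>t. u (x + t *\<^sub>R axis j 1)) differentiable (at 0)" for j x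
    using B[of "[]"] by (simp only: dparts.simps)
  show "(\<lambda>t. partial_deriv i u (x + t *\<^sub>R axis j 1)) differentiable (at 0)" for i j x
    using B[of "[i]"] by (simp only: dparts.simps)
  define S where "S = closure {x. u x \<noteq> 0}"
  have U: "open (- S)" unfolding S_def by (rule open_Compl) (rule closed_closure)
  have z0: "u x = 0" if "x \<notin> S" for x
  proof (rule ccontr)
    assume "u x \<noteq> 0"
    then have "x \<in> {x. u x \<noteq> 0}" by simp
    then have "x \<in> S" unfolding S_def by (rule subsetD[OF closure_subset])
    with that show False by contradiction
  qed
  have z0': "u x = 0" if "x \<in> - S" for x using that z0 by simp
  have z1: "partial_deriv j u x = 0" if "x \<notin> S" for x j
    using pd_zero_open[OF U z0', where p=x] that by simp
  have z1': "partial_deriv j u x = 0" if "x \<in> - S" for x j using that z1 by simp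
  have z2: "partial_deriv i (partial_deriv j u) x = 0" if "x \<notin> S" for x i j
    using pd_zero_open[OF U z1', where p=x] that by simp
  have S: "compact S" using cpt unfolding S_def .
  show "bdd_above (range (\<lambda>x. \<bar>u x\<bar>))" by (rule bdd_supp[OF c0 S z0])
  show "bdd_above (range (\<lambda>x. \<bar>partial_deriv j u x\<bar>))" for j by (rule bdd_supp[OF c1 S z1])
  show "bdd_above (range (\<lambda>x. \<bar>partial_deriv i (partial_deriv j u) x\<bar>))" for i j by (rule bdd_supp[OF c2 S z2])
qed


lemma lborel_reflect_integral:
  fixes G :: "'a::euclidean_space \<Rightarrow> real"
  assumes G: "G \<in> borel_measurable borel"
  shows "integral\<^sup>L lborel (\<lambda>y. G (- y)) = integral\<^sup>L lborel G"
proof -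
  have eq: "distr lborel borel (uminus :: 'a \<Rightarrow> 'a) = lborel"
  proof -
    have "lborel = density (distr lborel borel (\<lambda>x::'a. 0 + (-1::real) *\<^sub>R x)) (\<lambda>_. \<bar>-1::real\<bar>^DIM('a))"
      by (rule lborel_affine) simp
    also have "\<dots> = distr lborel borel (uminus :: 'a \<Rightarrow> 'a)"
      by (simp add: density_1)
    finally show ?thesis by simp
  qed
  have "integral\<^sup>L lborel G = integral\<^sup>L (distr lborel borel (uminus :: 'a \<Rightarrow> 'a)) G"
    by (simp only: eq)
  also have "\<dots> = integral\<^sup>L lborel (\<lambda>y. G (- y))"
    by (rule integral_distr) (auto simp: G)
  finally show ?thesis by simp
qed

lemma nn_to_int:
  fixes w :: "'a \<Rightarrow> real"
  assumes w: "w \<in> borel_measurable M" "\<And>y. 0 \<le> w y"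
    and b: "(\<integral>\<^sup>+y. ennreal (w y) \<partial>M) \<le> ennreal B" and B: "0 \<le> B"
  shows "integrable M w" "integral\<^sup>L M w \<le> B"
proof -
  have fin: "(\<integral>\<^sup>+y. ennreal (w y) \<partial>M) < \<infinity>"
    using b by (simp add: le_less_trans)
  show "integrable M w"
    using w fin by (intro integrableI_bounded) auto
  have "integral\<^sup>L M w = enn2real (\<integral>\<^sup>+y. ennreal (w y) \<partial>M)"
    using w by (intro integral_eq_nn_integral) auto
  also have "\<dots> \<le> B" using b B by (intro enn2real_leI) auto
  finally show "integral\<^sup>L M w \<le> B" .
qed

lemma abs_int_le:
  fixes g w :: "'a::euclidean_space \<Rightarrow> real"
  assumes w: "integrable M w" and g: "g \<in> borel_measurable M"
    and gb: "\<And>y. \<bar>g y\<bar> \<le> c * w y" and c: "0 \<le> c" and wB: "integral\<^sup>L M w \<le> B"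
  shows "integrable M g" "\<bar>integral\<^sup>L M g\<bar> \<le> c * B"
proof -
  have cw: "integrable M (\<lambda>y. c * w y)" using w by simp
  show ig: "integrable M g"
    by (rule Bochner_Integration.integrable_bound[OF cw g]) (intro AE_I2, metis gb abs_ge_self order_trans real_norm_def)
  have "\<bar>integral\<^sup>L M g\<bar> \<le> integral\<^sup>L M (\<lambda>y. c * w y)"
    by (rule integral_abs_bound_integral[OF ig cw gb])
  also have "\<dots> = c * integral\<^sup>L M w" by simp
  also have "\<dots> \<le> c * B" using c wB by (intro mult_left_mono)
  finally show "\<bar>integral\<^sup>L M g\<bar> \<le> c * B" .
qed

lemma ind_ennreal: "ennreal (indicator S y * r) = indicator S y * ennreal r"
  by (auto simp: indicator_def)

lemma Oint:
  fixes s :: real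
  assumes s: "1/2 \<le> s"
  defines "V \<equiv> unit_ball_vol (real CARD('n::finite)) * 2 ^ CARD('n)"
  shows "integrable lborel (\<lambda>y::real^'n. indicator (- ball 0 1) y * norm y powr (-(CARD('n) + 2 * s)))"
    "integral\<^sup>L lborel (\<lambda>y::real^'n. indicator (- ball 0 1) y * norm y powr (-(CARD('n) + 2 * s))) \<le> 2 * V"
proof -
  define a where "a = real CARD('n) + 2 * s"
  have "2 powr (real CARD('n) - a) \<le> 2 powr (-1)" unfolding a_def using s by (intro powr_mono) auto
  then have q: "2 powr (real CARD('n) - a) \<le> 1/2" by (simp add: powr_minus_divide)
  have V: "0 \<le> V" unfolding V_def by simp
  have "(\<integral>\<^sup>+y. indicator (- ball (0::real^'n) 1) y * ennreal (norm y powr (-a)) \<partial>lborel)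
     \<le> ennreal (V / (1 - 2 powr (real CARD('n) - a)))"
    using outer_integral[where 'a="real^'n", of a] s unfolding a_def V_def by simp
  also have "\<dots> \<le> ennreal (2 * V)"
  proof (intro ennreal_leI)
    have "V / (1 - 2 powr (real CARD('n) - a)) \<le> V / (1/2)"
      using q V by (intro divide_left_mono) auto
    then show "V / (1 - 2 powr (real CARD('n) - a)) \<le> 2 * V" by simp
  qed
  finally have *: "(\<integral>\<^sup>+y. ennreal (indicator (- ball (0::real^'n) 1) y * norm y powr (-a)) \<partial>lborel) \<le> ennreal (2 * V)"
    by (simp only: ind_ennreal)
  show "integrable lborel (\<lambda>y::real^'n. indicator (- ball 0 1) y * norm y powr (-(CARD('n) + 2 * s)))"
    using nn_to_int(1)[OF _ _ * ] V unfolding a_def by (auto simp: indicator_def)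
  show "integral\<^sup>L lborel (\<lambda>y::real^'n. indicator (- ball 0 1) y * norm y powr (-(CARD('n) + 2 * s))) \<le> 2 * V"
    using nn_to_int(2)[OF _ _ * ] V unfolding a_def by (auto simp: indicator_def)
qed

lemma Iint:
  fixes s :: real
  assumes s: "1/2 \<le> s" "s < 1"
  defines "V \<equiv> unit_ball_vol (real CARD('n::finite)) * 2 ^ CARD('n)"
  shows "integrable lborel (\<lambda>y::real^'n. indicator (ball 0 1) y * norm y powr (2 - (CARD('n) + 2 * s)))"
    "integral\<^sup>L lborel (\<lambda>y::real^'n. indicator (ball 0 1) y * norm y powr (2 - (CARD('n) + 2 * s))) \<le> 2 * V / (1 - s)"
proof -
  define b where "b = real CARD('n) + 2 * s - 2"
  have N1: "1 \<le> real CARD('n)" by simp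
  have b: "0 \<le> b" "b < real CARD('n)" unfolding b_def using s N1 by linarith+
  have t: "0 < 2 - 2 * s" "2 - 2 * s \<le> 1" using s by auto
  have q: "(2 - 2 * s)/4 \<le> 1 - 2 powr (b - real CARD('n))"
    using geo_const[OF t] unfolding b_def by (simp add: algebra_simps)
  have V: "0 \<le> V" unfolding V_def by simp
  have "(\<integral>\<^sup>+y. indicator (ball (0::real^'n) 1) y * ennreal (norm y powr (-b)) \<partial>lborel)
     \<le> ennreal (V / (1 - 2 powr (b - real CARD('n))))"
    using inner_integral[where 'a="real^'n", of b] b unfolding V_def by simp
  also have "\<dots> \<le> ennreal (2 * V / (1 - s))"
  proof (intro ennreal_leI)
    have "V / (1 - 2 powr (b - real CARD('n))) \<le> V / ((2 - 2 * s)/4)"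
      using q V t by (intro divide_left_mono) auto
    also have "\<dots> = 2 * V / (1 - s)" using s by (simp add: field_simps)
    finally show "V / (1 - 2 powr (b - real CARD('n))) \<le> 2 * V / (1 - s)" .
  qed
  finally have *: "(\<integral>\<^sup>+y. ennreal (indicator (ball (0::real^'n) 1) y * norm y powr (-b)) \<partial>lborel) \<le> ennreal (2 * V / (1 - s))"
    by (simp only: ind_ennreal)
  have e: "-b = 2 - (real CARD('n) + 2 * s)" unfolding b_def by simp
  have B: "0 \<le> 2 * V / (1 - s)" using V s by simp
  show "integrable lborel (\<lambda>y::real^'n. indicator (ball 0 1) y * norm y powr (2 - (CARD('n) + 2 * s)))"
    using nn_to_int(1)[OF _ _ * B] unfolding e by (auto simp: indicator_def)
  show "integral\<^sup>L lborel (\<lambda>y::real^'n. indicator (ball 0 1) y * norm y powr (2 - (CARD('n) + 2 * s))) \<le> 2 * V / (1 - s)"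
    using nn_to_int(2)[OF _ _ * B] unfolding e by (auto simp: indicator_def)
qed


lemma dct_ball:
  fixes \<phi> w :: "'a::euclidean_space \<Rightarrow> real"
  assumes \<phi>m: "\<phi> \<in> borel_measurable borel" and \<phi>0: "\<phi> 0 = 0" and w: "integrable lborel w"
    and \<phi>b: "\<And>y. \<bar>indicator (ball 0 1) y * \<phi> y\<bar> \<le> w y"
  shows "((\<lambda>\<epsilon>. integral\<^sup>L lborel (\<lambda>y. indicator {y. \<epsilon> \<le> norm y \<and> norm y < 1} y * \<phi> y))
           \<longlongrightarrow> integral\<^sup>L lborel (\<lambda>y. indicator (ball 0 1) y * \<phi> y)) (at_right 0)"
proof (rule tendsto_at_right_sequentially[of 0 1])
  show "(0::real) < 1" by simp
  fix S :: "nat \<Rightarrow> real" assume S: "\<And>n. 0 < S n" "\<And>n. S n < 1" "decseq S" "S \<longlonglongrightarrow> 0"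
  have m1[measurable]: "{y::'a. r \<le> norm y \<and> norm y < 1} \<in> sets borel" for r
    by measurable
  have [measurable]: "ball (0::'a) 1 \<in> sets borel" by simp
  have [measurable]: "\<phi> \<in> borel_measurable lborel" using \<phi>m by simp
  show "(\<lambda>n. integral\<^sup>L lborel (\<lambda>y. indicator {y. S n \<le> norm y \<and> norm y < 1} y * \<phi> y))
      \<longlonglongrightarrow> integral\<^sup>L lborel (\<lambda>y. indicator (ball 0 1) y * \<phi> y)"
  proof (rule integral_dominated_convergence[where w=w])
    show "(\<lambda>y. indicator (ball 0 1) y * \<phi> y) \<in> borel_measurable lborel" by measurable
    show "(\<lambda>y. indicator {y. S i \<le> norm y \<and> norm y < 1} y * \<phi> y) \<in> borel_measurable lborel" for i
      by measurable
    show "integrable lborel w" by (rule w)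
    show "AE y in lborel. (\<lambda>i. indicator {y. S i \<le> norm y \<and> norm y < 1} y * \<phi> y)
        \<longlonglongrightarrow> indicator (ball 0 1) y * \<phi> y"
    proof (rule AE_I2)
      fix y :: 'a
      show "(\<lambda>i. indicator {y. S i \<le> norm y \<and> norm y < 1} y * \<phi> y) \<longlonglongrightarrow> indicator (ball 0 1) y * \<phi> y"
      proof (cases "y = 0")
        case True then show ?thesis using \<phi>0 by simp
      next
        case False
        then have "0 < norm y" by simp
        then have "eventually (\<lambda>i. S i < norm y) sequentially"
          using order_tendstoD(2)[OF S(4)] by blast
        then have "eventually (\<lambda>i. indicator {y. S i \<le> norm y \<and> norm y < 1} y * \<phi> y = indicator (ball 0 1) y * \<phi> y) sequentially"
          by eventually_elim (auto simp: indicator_def)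
        then show ?thesis by (rule tendsto_eventually)
      qed
    qed
    show "AE y in lborel. norm (indicator {y. S i \<le> norm y \<and> norm y < 1} y * \<phi> y) \<le> w y" for i
    proof (rule AE_I2)
      fix y :: 'a
      have "\<bar>indicator {y. S i \<le> norm y \<and> norm y < 1} y * \<phi> y\<bar> \<le> \<bar>indicator (ball 0 1) y * \<phi> y\<bar>"
        by (auto simp: indicator_def)
      then show "norm (indicator {y. S i \<le> norm y \<and> norm y < 1} y * \<phi> y) \<le> w y"
        using \<phi>b[of y] by simp
    qed
  qed
qed

lemma main_x:
  fixes K :: "real^'n::finite \<Rightarrow> real^'n \<Rightarrow> ennreal" and u :: "real^'n \<Rightarrow> real" and x :: "real^'n"
    and s C :: real
  assumes s: "1/2 \<le> s" "s < 1" and C: "0 < C"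
    and Km: "(\<lambda>p. K (fst p) (snd p)) \<in> borel_measurable borel"
    and Kub: "\<And>x z. x \<noteq> z \<Longrightarrow> K x z \<le> ennreal C / ennreal (norm (x - z) powr (real CARD('n) + 2 * s))"
    and Cs: "C_sharp K < \<infinity>"
    and u: "smooth_compact_support u"
  defines "V \<equiv> unit_ball_vol (real CARD('n)) * 2 ^ CARD('n)"
    and "M0 \<equiv> (SUP x. \<bar>u x\<bar>)"
    and "D1 \<equiv> (\<Sum>j\<in>UNIV. SUP x. \<bar>partial_deriv j u x\<bar>)"
    and "D2 \<equiv> (\<Sum>i\<in>UNIV. \<Sum>j\<in>UNIV. SUP x. \<bar>partial_deriv i (partial_deriv j u) x\<bar>)"
  shows "(\<forall>\<epsilon>>0. set_integrable lborel (- ball 0 \<epsilon>) (\<lambda>y. (u x - u (x - y)) * enn2real (K x (x - y))))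
     \<and> (\<exists>L. (trunc_op K u x \<longlongrightarrow> L) (at_right 0))
     \<and> \<bar>Lim (at_right 0) (trunc_op K u x)\<bar> \<le> 2 * M0 * C * (2 * V)
          + (real CARD('n))^2 * D2 * C * (2 * V / (1 - s)) + D1 / 2 * enn2real (C_sharp K)"
proof -
  define N where "N = real CARD('n)"
  define a where "a = N + 2 * s"
  have V: "0 \<le> V" unfolding V_def by simp
  note sf = smooth_facts[OF u]
  have M0b: "\<bar>u z\<bar> \<le> M0" for z unfolding M0_def by (rule sup_upper[OF sf(6)])
  have M0: "0 \<le> M0" unfolding M0_def by (rule sup_nonneg[OF sf(6)])
  have D1: "0 \<le> D1" unfolding D1_def by (intro sum_nonneg sup_nonneg sf(7))
  have D2b: "\<bar>partial_deriv i (partial_deriv j u) z\<bar> \<le> D2" for i j z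
  proof -
    have "\<bar>partial_deriv i (partial_deriv j u) z\<bar> \<le> (SUP x. \<bar>partial_deriv i (partial_deriv j u) x\<bar>)"
      by (rule sup_upper[OF sf(8)])
    also have "\<dots> \<le> (\<Sum>j\<in>UNIV. SUP x. \<bar>partial_deriv i (partial_deriv j u) x\<bar>)"
      by (rule member_le_sum) (auto intro: sup_nonneg sf(8))
    also have "\<dots> \<le> D2" unfolding D2_def
      by (rule member_le_sum[where f="\<lambda>i. \<Sum>j\<in>UNIV. SUP x. \<bar>partial_deriv i (partial_deriv j u) x\<bar>"])
         (auto intro!: sum_nonneg sup_nonneg sf(8))
    finally show ?thesis .
  qed
  have D2: "0 \<le> D2" using D2b[of undefined undefined x] by linarith
  have Cs0: "0 \<le> enn2real (C_sharp K)" by simp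
  have um[measurable]: "u \<in> borel_measurable borel" by (rule borel_measurable_continuous_onI[OF sf(1)])

  define g where "g y = (\<Sum>j\<in>UNIV. partial_deriv j u x * y$j)" for y :: "real^'n"
  have gb: "\<bar>g y\<bar> \<le> D1 * norm y" for y
  proof -
    have "\<bar>g y\<bar> \<le> (\<Sum>j\<in>UNIV. \<bar>partial_deriv j u x * y$j\<bar>)" unfolding g_def by (rule sum_abs)
    also have "\<dots> \<le> (\<Sum>j\<in>UNIV. (SUP x. \<bar>partial_deriv j u x\<bar>) * norm y)"
    proof (rule sum_mono)
      fix j
      have "\<bar>partial_deriv j u x\<bar> * \<bar>y$j\<bar> \<le> (SUP x. \<bar>partial_deriv j u x\<bar>) * norm y"
        by (intro mult_mono sup_upper sf(7) component_le_norm_cart sup_nonneg) auto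
      then show "\<bar>partial_deriv j u x * y$j\<bar> \<le> (SUP x. \<bar>partial_deriv j u x\<bar>) * norm y"
        by (simp add: abs_mult)
    qed
    also have "\<dots> = D1 * norm y" unfolding D1_def by (simp add: sum_distrib_right)
    finally show ?thesis .
  qed
  have gneg: "g (- y) = - g y" for y unfolding g_def by (simp add: sum_negf)
  have g0: "g 0 = 0" unfolding g_def by simp
  have gm[measurable]: "g \<in> borel_measurable borel" unfolding g_def
    by (intro borel_measurable_continuous_onI continuous_intros)

  have T2: "\<bar>u x - u (x - y) - g y\<bar> \<le> N^2 * D2 * (norm y)^2" for y
    using second_order[OF sf(4) sf(5) D2b, where x=x and I=UNIV and y=y] unfolding g_def N_def sum_axis_eq by (simp add: mult.commute mult.left_commute)

  define k where "k y = enn2real (K x (x - y))" for y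
  define k' where "k' y = enn2real (K x (x + y))" for y
  have km[measurable]: "k \<in> borel_measurable borel"
  proof -
    have pm: "(\<lambda>y::real^'n. (x, x - y)) \<in> borel_measurable borel"
      by (intro borel_measurable_continuous_onI continuous_intros)
    have "(\<lambda>y. K x (x - y)) \<in> borel_measurable borel"
      using measurable_compose[OF pm Km] by simp
    then show ?thesis unfolding k_def[abs_def] by (rule borel_measurable_enn2real)
  qed
  have k'm[measurable]: "k' \<in> borel_measurable borel"
  proof -
    have pm: "(\<lambda>y::real^'n. (x, x + y)) \<in> borel_measurable borel"
      by (intro borel_measurable_continuous_onI continuous_intros)
    have "(\<lambda>y. K x (x + y)) \<in> borel_measurable borel"
      using measurable_compose[OF pm Km] by simp
    then show ?thesis unfolding k'_def[abs_def] by (rule borel_measurable_enn2real)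
  qed
  have [measurable]: "ball (0::real^'n) 1 \<in> sets borel" "ball (0::real^'n) 1 \<in> sets lborel" by simp_all
  have k0: "0 \<le> k y" "0 \<le> k' y" for y unfolding k_def k'_def by auto
  have kneg: "k (- y) = k' y" for y unfolding k_def k'_def by simp
  have kb_gen: "enn2real (K x z) \<le> C * norm (x - z) powr (-a)" if "x \<noteq> z" for z
  proof -
    have pos: "0 < norm (x - z) powr a" using that by simp
    have "K x z \<le> ennreal C / ennreal (norm (x - z) powr a)"
      using Kub[OF that] unfolding a_def N_def by simp
    also have "\<dots> = ennreal (C / norm (x - z) powr a)" using C pos by (simp add: divide_ennreal)
    finally have "enn2real (K x z) \<le> C / norm (x - z) powr a" using C pos by (intro enn2real_leI) auto
    then show ?thesis by (simp add: powr_minus_divide)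
  qed
  have kb: "k y \<le> C * norm y powr (-a)" if "y \<noteq> 0" for y
    using kb_gen[of "x - y"] that unfolding k_def by simp
  have k'b: "k' y \<le> C * norm y powr (-a)" if "y \<noteq> 0" for y
    using kb_gen[of "x + y"] that unfolding k'_def by simp

  define f where "f y = (u x - u (x - y)) * k y" for y
  define hk where "hk y = (u x - u (x - y) - g y) * k y" for y
  define gs where "gs y = g y * (k y - k' y) / 2" for y
  have fm[measurable]: "f \<in> borel_measurable borel" unfolding f_def[abs_def] by measurable
  have hkm[measurable]: "hk \<in> borel_measurable borel" unfolding hk_def[abs_def] by measurable
  have gsm[measurable]: "gs \<in> borel_measurable borel" unfolding gs_def[abs_def] by measurable
  have f0: "f 0 = 0" "hk 0 = 0" "gs 0 = 0" unfolding f_def hk_def gs_def by (auto simp: g0)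
  have fb: "\<bar>f y\<bar> \<le> 2 * M0 * C * norm y powr (-a)" for y
  proof (cases "y = 0")
    case True then show ?thesis using f0 M0 C by simp
  next
    case False
    have "\<bar>u x - u (x - y)\<bar> \<le> 2 * M0" using M0b[of x] M0b[of "x - y"] by linarith
    moreover have "k y \<le> C * norm y powr (-a)" by (rule kb[OF False])
    ultimately have "\<bar>u x - u (x - y)\<bar> * k y \<le> (2 * M0) * (C * norm y powr (-a))"
      using k0 M0 by (intro mult_mono) auto
    moreover have "\<bar>f y\<bar> = \<bar>u x - u (x - y)\<bar> * k y" unfolding f_def using k0[of y] by (simp add: abs_mult)
    moreover have "(2 * M0) * (C * norm y powr (-a)) = 2 * M0 * C * norm y powr (-a)" by simp
    ultimately show ?thesis by linarith
  qed
  have hkb: "\<bar>hk y\<bar> \<le> N^2 * D2 * C * norm y powr (2 - a)" for y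
  proof (cases "y = 0")
    case True then show ?thesis using f0 by simp
  next
    case False
    have "\<bar>hk y\<bar> = \<bar>u x - u (x - y) - g y\<bar> * k y" unfolding hk_def using k0[of y] by (simp add: abs_mult)
    also have "\<dots> \<le> (N^2 * D2 * (norm y)^2) * (C * norm y powr (-a))"
      using T2[of y] kb[OF False] k0[of y] D2 by (intro mult_mono) auto
    also have "\<dots> = N^2 * D2 * C * ((norm y)^2 * norm y powr (-a))" by (simp add: algebra_simps)
    also have "(norm y)^2 * norm y powr (-a) = norm y powr (2 - a)"
    proof -
      have "(norm y)^2 = norm y powr 2" using powr_realpow[of "norm y" 2] False by simp
      moreover have "norm y powr 2 * norm y powr (-a) = norm y powr (2 + -a)" by (rule powr_add[symmetric])
      ultimately show ?thesis by simp
    qed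
    finally show ?thesis .
  qed
  have gsb: "\<bar>gs y\<bar> \<le> D1 / 2 * (norm y * \<bar>k y - k' y\<bar>)" for y
  proof -
    have "\<bar>gs y\<bar> = \<bar>g y\<bar> * \<bar>k y - k' y\<bar> / 2" unfolding gs_def by (simp add: abs_mult)
    also have "\<dots> \<le> (D1 * norm y) * \<bar>k y - k' y\<bar> / 2"
      using gb[of y] by (intro divide_right_mono mult_right_mono) auto
    finally show ?thesis by (simp add: algebra_simps)
  qed

  define Wout where "Wout y = indicator (- ball 0 1) y * norm y powr (-a)" for y :: "real^'n"
  define Win where "Win y = indicator (ball 0 1) y * norm y powr (2 - a)" for y :: "real^'n"
  define Wsh where "Wsh y = indicator (ball 0 1) y * (norm y * \<bar>k y - k' y\<bar>)" for y :: "real^'n"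
  have Wout: "integrable lborel Wout" "integral\<^sup>L lborel Wout \<le> 2 * V"
    using Oint[OF s(1), where 'n='n] unfolding Wout_def[abs_def] a_def N_def V_def by (simp_all add: minus_add_distrib)
  have Win: "integrable lborel Win" "integral\<^sup>L lborel Win \<le> 2 * V / (1 - s)"
    using Iint[OF s, where 'n='n] unfolding Win_def[abs_def] a_def N_def V_def by simp_all
  have Wsh: "integrable lborel Wsh" "integral\<^sup>L lborel Wsh \<le> enn2real (C_sharp K)"
  proof -
    have "(\<integral>\<^sup>+y. ennreal (Wsh y) \<partial>lborel)
        = (\<integral>\<^sup>+y\<in>ball 0 1. ennreal (norm y * \<bar>enn2real (K x (x + y)) - enn2real (K x (x - y))\<bar>) \<partial>lborel)"
      by (intro nn_integral_cong) (auto simp: Wsh_def k_def k'_def indicator_def abs_minus_commute)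
    also have "\<dots> \<le> C_sharp K" unfolding C_sharp_def by (rule SUP_upper) simp
    also have "\<dots> = ennreal (enn2real (C_sharp K))" using Cs by simp
    finally have *: "(\<integral>\<^sup>+y. ennreal (Wsh y) \<partial>lborel) \<le> ennreal (enn2real (C_sharp K))" .
    have "Wsh \<in> borel_measurable borel" unfolding Wsh_def[abs_def] by measurable
    then have Wm: "Wsh \<in> borel_measurable lborel" by simp
    have Wnn: "0 \<le> Wsh y" for y unfolding Wsh_def by simp
    show "integrable lborel Wsh" "integral\<^sup>L lborel Wsh \<le> enn2real (C_sharp K)"
      using nn_to_int[OF Wm Wnn * Cs0] by auto
  qed
  have a_pos: "0 \<le> a" unfolding a_def N_def using s by simp
  have fm'[measurable]: "f \<in> borel_measurable lborel" "hk \<in> borel_measurable lborel"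
    "gs \<in> borel_measurable lborel" "g \<in> borel_measurable lborel"
    "k \<in> borel_measurable lborel" "k' \<in> borel_measurable lborel" by simp_all
  have ib: "integrable lborel (\<lambda>y::real^'n. indicator (ball 0 1) y :: real)"
    by (intro integrable_real_indicator) (auto simp: emeasure_lborel_ball_finite[unfolded infinity_ennreal_def])
  have Wout0: "0 \<le> Wout y" "0 \<le> Win y" "0 \<le> Wsh y" for y
    unfolding Wout_def Win_def Wsh_def by simp_all

  have eqf: "(\<lambda>y. (u x - u (x - y)) * enn2real (K x (x - y))) = f" unfolding f_def k_def by simp
  have part1: "set_integrable lborel (- ball 0 \<epsilon>) (\<lambda>y. (u x - u (x - y)) * enn2real (K x (x - y)))"
    if \<epsilon>: "0 < \<epsilon>" for \<epsilon>
  proof -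
    define w where "w y = Wout y + \<epsilon> powr (-a) * indicator (ball 0 1) y" for y :: "real^'n"
    have wi: "integrable lborel w" unfolding w_def[abs_def]
      using Wout(1) ib by (intro Bochner_Integration.integrable_add integrable_mult_right)
    have "integrable lborel (\<lambda>y. indicator (- ball 0 \<epsilon>) y *\<^sub>R f y)"
    proof (rule abs_int_le(1)[OF wi _ _ _ order_refl])
      have [measurable]: "- ball (0::real^'n) \<epsilon> \<in> sets lborel" by simp
      show "(\<lambda>y. indicator (- ball 0 \<epsilon>) y *\<^sub>R f y) \<in> borel_measurable lborel" by measurable
      show "0 \<le> 2 * M0 * C" using M0 C by simp
      fix y :: "real^'n"
      show "\<bar>indicator (- ball 0 \<epsilon>) y *\<^sub>R f y\<bar> \<le> 2 * M0 * C * w y"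
      proof (cases "norm y < \<epsilon>")
        case True
        have "0 \<le> w y" unfolding w_def using Wout0[of y] by simp
        then show ?thesis using True M0 C by (simp add: indicator_def)
      next
        case False
        then have ge: "\<epsilon> \<le> norm y" by simp
        have "\<bar>indicator (- ball 0 \<epsilon>) y *\<^sub>R f y\<bar> = \<bar>f y\<bar>" using ge by (simp add: indicator_def)
        also have "\<dots> \<le> 2 * M0 * C * norm y powr (-a)" by (rule fb)
        also have "\<dots> \<le> 2 * M0 * C * w y"
        proof (rule mult_left_mono)
          show "norm y powr (-a) \<le> w y"
          proof (cases "norm y < 1")
            case True
            have "norm y powr (-a) \<le> \<epsilon> powr (-a)" using ge \<epsilon> a_pos by (intro powr_mono2') auto
            then show ?thesis using True by (simp add: w_def Wout_def indicator_def)
          next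
            case False then show ?thesis by (simp add: w_def Wout_def indicator_def)
          qed
        qed (use M0 C in auto)
        finally show ?thesis .
      qed
    qed
    then show ?thesis unfolding eqf set_integrable_def .
  qed

  define A where "A \<epsilon> = {y::real^'n. \<epsilon> \<le> norm y \<and> norm y < 1}" for \<epsilon>
  have Aeq: "A \<epsilon> = ball 0 1 - ball 0 \<epsilon>" for \<epsilon> unfolding A_def by auto
  have Ab[measurable]: "A \<epsilon> \<in> sets borel" for \<epsilon> unfolding Aeq by (intro sets.Diff) simp_all
  have Al[measurable]: "A \<epsilon> \<in> sets lborel" for \<epsilon> using Ab[of \<epsilon>] by simp
  have Asub: "y \<in> A \<epsilon> \<Longrightarrow> y \<in> ball 0 1" for y \<epsilon> unfolding A_def by simp
  define c0 where "c0 = integral\<^sup>L lborel (\<lambda>y. indicator (- ball 0 1) y * f y)"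
  have c0: "integrable lborel (\<lambda>y. indicator (- ball 0 1) y * f y)" "\<bar>c0\<bar> \<le> 2 * M0 * C * (2 * V)"
  proof -
    have [measurable]: "- ball (0::real^'n) 1 \<in> sets lborel" by simp
    have m: "(\<lambda>y. indicator (- ball 0 1) y * f y) \<in> borel_measurable lborel" by measurable
    have b: "\<bar>indicator (- ball 0 1) y * f y\<bar> \<le> 2 * M0 * C * Wout y" for y
      using fb[of y] M0 C by (auto simp: Wout_def indicator_def)
    show "integrable lborel (\<lambda>y. indicator (- ball 0 1) y * f y)" "\<bar>c0\<bar> \<le> 2 * M0 * C * (2 * V)"
      using abs_int_le[OF Wout(1) m b _ Wout(2)] M0 C unfolding c0_def by auto
  qed
  have cN: "0 \<le> N^2 * D2 * C" using D2 C by simp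
  have hkA: "\<bar>indicator S y * hk y\<bar> \<le> N^2 * D2 * C * Win y" if "S \<subseteq> ball 0 1" for S y
    using hkb[of y] that cN by (auto simp: Win_def indicator_def)
  have gsA: "\<bar>indicator S y * gs y\<bar> \<le> D1 / 2 * Wsh y" if "S \<subseteq> ball 0 1" for S y
    using gsb[of y] that D1 by (auto simp: Wsh_def indicator_def)
  have hkI: "integrable lborel (\<lambda>y. indicator S y * hk y)" "\<bar>integral\<^sup>L lborel (\<lambda>y. indicator S y * hk y)\<bar> \<le> N^2 * D2 * C * (2 * V / (1 - s))"
    if "S \<subseteq> ball 0 1" "S \<in> sets lborel" for S
  proof -
    have m: "(\<lambda>y. indicator S y * hk y) \<in> borel_measurable lborel" using that(2) by measurable
    show "integrable lborel (\<lambda>y. indicator S y * hk y)" "\<bar>integral\<^sup>L lborel (\<lambda>y. indicator S y * hk y)\<bar> \<le> N^2 * D2 * C * (2 * V / (1 - s))"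
      using abs_int_le[OF Win(1) m hkA[OF that(1)] cN Win(2)] by auto
  qed
  have gsI: "integrable lborel (\<lambda>y. indicator S y * gs y)" "\<bar>integral\<^sup>L lborel (\<lambda>y. indicator S y * gs y)\<bar> \<le> D1 / 2 * enn2real (C_sharp K)"
    if "S \<subseteq> ball 0 1" "S \<in> sets lborel" for S
  proof -
    have m: "(\<lambda>y. indicator S y * gs y) \<in> borel_measurable lborel" using that(2) by measurable
    show "integrable lborel (\<lambda>y. indicator S y * gs y)" "\<bar>integral\<^sup>L lborel (\<lambda>y. indicator S y * gs y)\<bar> \<le> D1 / 2 * enn2real (C_sharp K)"
      using abs_int_le[OF Wsh(1) m gsA[OF that(1)] _ Wsh(2)] D1 by auto
  qed
  have gkI: "integrable lborel (\<lambda>y. indicator (A \<epsilon>) y * (g y * k y))"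
     "integrable lborel (\<lambda>y. indicator (A \<epsilon>) y * (g y * k' y))" if \<epsilon>: "0 < \<epsilon>" for \<epsilon>
  proof -
    have cc: "0 \<le> D1 * (C * \<epsilon> powr (-a))" using D1 C by simp
    have b: "\<bar>indicator (A \<epsilon>) y * (g y * kk y)\<bar> \<le> D1 * (C * \<epsilon> powr (-a)) * indicator (ball 0 1) y"
      if kk: "\<And>y. y \<noteq> 0 \<Longrightarrow> kk y \<le> C * norm y powr (-a)" "\<And>y. 0 \<le> kk y" for kk y
    proof (cases "y \<in> A \<epsilon>")
      case True
      then have y: "\<epsilon> \<le> norm y" "norm y < 1" "y \<noteq> 0" using \<epsilon> unfolding A_def by auto
      have "\<bar>g y\<bar> \<le> D1" using gb[of y] y D1 by (smt (verit) mult_left_le)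
      moreover have "kk y \<le> C * \<epsilon> powr (-a)"
      proof -
        have "norm y powr (-a) \<le> \<epsilon> powr (-a)" using y \<epsilon> a_pos by (intro powr_mono2') auto
        then show ?thesis using kk(1)[OF y(3)] C by (smt (verit) mult_left_mono)
      qed
      ultimately have "\<bar>g y\<bar> * kk y \<le> D1 * (C * \<epsilon> powr (-a))" using kk(2)[of y] D1 by (intro mult_mono) auto
      then show ?thesis using True Asub[OF True] kk(2)[of y] by (simp add: indicator_def abs_mult)
    next
      case False then show ?thesis using cc Asub by (simp add: indicator_def)
    qed
    have i2: "integrable lborel (\<lambda>y::real^'n. D1 * (C * \<epsilon> powr (-a)) * indicator (ball 0 1) y)"
      using ib by (intro integrable_mult_right)
    show "integrable lborel (\<lambda>y. indicator (A \<epsilon>) y * (g y * k y))"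
      by (rule Bochner_Integration.integrable_bound[OF i2]) (use b[OF kb k0(1)] cc in \<open>auto intro!: AE_I2\<close>)
    show "integrable lborel (\<lambda>y. indicator (A \<epsilon>) y * (g y * k' y))"
      by (rule Bochner_Integration.integrable_bound[OF i2]) (use b[OF k'b k0(2)] cc in \<open>auto intro!: AE_I2\<close>)
  qed
  have refl: "integral\<^sup>L lborel (\<lambda>y. indicator (A \<epsilon>) y * (g y * k' y)) = - integral\<^sup>L lborel (\<lambda>y. indicator (A \<epsilon>) y * (g y * k y))" for \<epsilon>
  proof -
    define G where "G y = indicator (A \<epsilon>) y * (g y * k y)" for y
    have Gm: "G \<in> borel_measurable borel" unfolding G_def[abs_def] by measurable
    have "(\<lambda>y. G (- y)) = (\<lambda>y. - (indicator (A \<epsilon>) y * (g y * k' y)))"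
      by (rule ext) (simp add: G_def A_def gneg kneg indicator_def)
    then have "integral\<^sup>L lborel G = - integral\<^sup>L lborel (\<lambda>y. indicator (A \<epsilon>) y * (g y * k' y))"
      using lborel_reflect_integral[OF Gm] by simp
    then show ?thesis unfolding G_def by simp
  qed
  have decomp: "trunc_op K u x \<epsilon> = c0 + (integral\<^sup>L lborel (\<lambda>y. indicator (A \<epsilon>) y * hk y)
                  + integral\<^sup>L lborel (\<lambda>y. indicator (A \<epsilon>) y * gs y))"
    if \<epsilon>: "0 < \<epsilon>" "\<epsilon> < 1" for \<epsilon>
  proof -
    have Ab: "A \<epsilon> \<subseteq> ball 0 1" using Asub by blast
    have "trunc_op K u x \<epsilon> = integral\<^sup>L lborel (\<lambda>y. indicator (- ball 0 \<epsilon>) y *\<^sub>R f y)"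
      unfolding trunc_op_def set_lebesgue_integral_def eqf ..
    also have "(\<lambda>y. indicator (- ball 0 \<epsilon>) y *\<^sub>R f y) = (\<lambda>y. indicator (- ball 0 1) y * f y
        + (indicator (A \<epsilon>) y * hk y + indicator (A \<epsilon>) y * (g y * k y)))"
      using \<epsilon> by (auto simp: fun_eq_iff indicator_def A_def f_def hk_def algebra_simps)
    also have "integral\<^sup>L lborel \<dots> = c0 + (integral\<^sup>L lborel (\<lambda>y. indicator (A \<epsilon>) y * hk y)
        + integral\<^sup>L lborel (\<lambda>y. indicator (A \<epsilon>) y * (g y * k y)))"
      unfolding c0_def using c0(1) hkI(1)[OF Ab] gkI(1)[OF \<epsilon>(1)] by simp
    also have "integral\<^sup>L lborel (\<lambda>y. indicator (A \<epsilon>) y * (g y * k y)) = integral\<^sup>L lborel (\<lambda>y. indicator (A \<epsilon>) y * gs y)"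
    proof -
      have "(\<lambda>y. indicator (A \<epsilon>) y * gs y) = (\<lambda>y. (indicator (A \<epsilon>) y * (g y * k y) - indicator (A \<epsilon>) y * (g y * k' y)) / 2)"
        by (auto simp: fun_eq_iff gs_def algebra_simps)
      then have "integral\<^sup>L lborel (\<lambda>y. indicator (A \<epsilon>) y * gs y)
          = (integral\<^sup>L lborel (\<lambda>y. indicator (A \<epsilon>) y * (g y * k y)) - integral\<^sup>L lborel (\<lambda>y. indicator (A \<epsilon>) y * (g y * k' y))) / 2"
        using gkI[OF \<epsilon>(1)] by simp
      then show ?thesis using refl[of \<epsilon>] by simp
    qed
    finally show ?thesis .
  qed
  define Lhk where "Lhk = integral\<^sup>L lborel (\<lambda>y. indicator (ball 0 1) y * hk y)"
  define Lgs where "Lgs = integral\<^sup>L lborel (\<lambda>y. indicator (ball 0 1) y * gs y)"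
  have lim_hk: "((\<lambda>\<epsilon>. integral\<^sup>L lborel (\<lambda>y. indicator (A \<epsilon>) y * hk y)) \<longlongrightarrow> Lhk) (at_right 0)"
    unfolding A_def Lhk_def
    by (rule dct_ball[OF hkm f0(2) _ hkA[OF order_refl]]) (use Win(1) in simp)
  have lim_gs: "((\<lambda>\<epsilon>. integral\<^sup>L lborel (\<lambda>y. indicator (A \<epsilon>) y * gs y)) \<longlongrightarrow> Lgs) (at_right 0)"
    unfolding A_def Lgs_def
    by (rule dct_ball[OF gsm f0(3) _ gsA[OF order_refl]]) (use Wsh(1) in simp)
  have ev: "eventually (\<lambda>\<epsilon>. c0 + (integral\<^sup>L lborel (\<lambda>y. indicator (A \<epsilon>) y * hk y)
                  + integral\<^sup>L lborel (\<lambda>y. indicator (A \<epsilon>) y * gs y)) = trunc_op K u x \<epsilon>) (at_right 0)"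
  proof -
    have e: "eventually (\<lambda>\<epsilon>. \<epsilon> \<in> {0<..<1}) (at_right (0::real))"
      by (rule eventually_at_right_real) simp
    then show ?thesis by eventually_elim (simp add: decomp)
  qed
  have lim: "(trunc_op K u x \<longlongrightarrow> c0 + (Lhk + Lgs)) (at_right 0)"
    using tendsto_cong[OF ev] tendsto_add[OF tendsto_const[of c0] tendsto_add[OF lim_hk lim_gs]] by simp
  have Lim: "Lim (at_right 0) (trunc_op K u x) = c0 + (Lhk + Lgs)"
    using lim by (intro tendsto_Lim) simp_all
  have Lhkb: "\<bar>Lhk\<bar> \<le> N^2 * D2 * C * (2 * V / (1 - s))" unfolding Lhk_def by (rule hkI(2)) simp_all
  have Lgsb: "\<bar>Lgs\<bar> \<le> D1 / 2 * enn2real (C_sharp K)" unfolding Lgs_def by (rule gsI(2)) simp_all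
  have "\<bar>Lim (at_right 0) (trunc_op K u x)\<bar> \<le> 2 * M0 * C * (2 * V)
          + (real CARD('n))^2 * D2 * C * (2 * V / (1 - s)) + D1 / 2 * enn2real (C_sharp K)"
    unfolding Lim using c0(2) Lhkb Lgsb unfolding N_def by linarith
  then show ?thesis using part1 lim by blast
qed


lemma final_arith:
  fixes M0 D1 D2 Cs C s V N :: real
  assumes nn: "0 \<le> M0" "0 \<le> D1" "0 \<le> D2" "0 \<le> Cs" "0 < C" "0 \<le> V" "0 \<le> N"
    and s: "1/2 \<le> s" "s < 1"
  shows "2 * M0 * C * (2 * V) + N^2 * D2 * C * (2 * V / (1 - s)) + D1 / 2 * Cs
     \<le> (4 * V * (N^2 + 1) + 1) * (M0 + D1 + D2) * (C / (s * (1 - s)) + Cs)"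
proof -
  define Q where "Q = C / (s * (1 - s))"
  define Cn where "Cn = 4 * V * (N^2 + 1) + 1"
  have s0: "0 < s" "0 < 1 - s" using s by auto
  have Q1: "C / (1 - s) \<le> Q" unfolding Q_def using s0 nn(5) s
    by (intro divide_left_mono) (auto intro: mult_pos_pos simp: mult_le_cancel_right1)
  have Q2: "C \<le> C / (1 - s)" using s0 nn(5) by (simp add: le_divide_eq)
  have Q0: "0 \<le> Q" unfolding Q_def using s0 nn(5) by simp
  have c1: "4 * V \<le> Cn" "2 * N^2 * V \<le> Cn" "1/2 \<le> Cn" "0 \<le> Cn"
    unfolding Cn_def using nn by (auto simp: algebra_simps intro: mult_nonneg_nonneg)
  have t1: "2 * M0 * C * (2 * V) \<le> Cn * M0 * Q"
  proof -
    have "2 * M0 * C * (2 * V) = (4 * V) * M0 * C" by simp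
    also have "\<dots> \<le> Cn * M0 * Q" using c1 Q1 Q2 nn by (intro mult_mono) auto
    finally show ?thesis .
  qed
  have t2: "N^2 * D2 * C * (2 * V / (1 - s)) \<le> Cn * D2 * Q"
  proof -
    have "N^2 * D2 * C * (2 * V / (1 - s)) = (2 * N^2 * V) * D2 * (C / (1 - s))" by simp
    also have "\<dots> \<le> Cn * D2 * Q" using c1 Q1 nn s0 by (intro mult_mono) auto
    finally show ?thesis .
  qed
  have t3: "D1 / 2 * Cs \<le> Cn * D1 * Cs"
  proof -
    have "D1 / 2 * Cs = (1/2) * D1 * Cs" by simp
    also have "\<dots> \<le> Cn * D1 * Cs" using c1 nn by (intro mult_mono) auto
    finally show ?thesis .
  qed
  have "Cn * M0 * Q + Cn * D2 * Q + Cn * D1 * Cs \<le> Cn * (M0 + D1 + D2) * (Q + Cs)"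
  proof -
    have "Cn * (M0 + D1 + D2) * (Q + Cs) - (Cn * M0 * Q + Cn * D2 * Q + Cn * D1 * Cs)
        = Cn * (M0 * Cs + D1 * Q + D2 * Cs)" by (simp add: algebra_simps)
    also have "\<dots> \<ge> 0" using c1 nn Q0 by simp
    finally show ?thesis by simp
  qed
  then show ?thesis using t1 t2 t3 unfolding Q_def Cn_def by linarith
qed


theorem lemmaA2:
  shows "\<exists>Cn>0. \<forall>(s::real) (K :: real^'n::finite \<Rightarrow> real^'n \<Rightarrow> ennreal) (c::real) (C::real)
      (\<rho>::ennreal) (u :: real^'n \<Rightarrow> real).
    1/2 \<le> s \<and> s < 1 \<and> 0 < c \<and> 0 < C \<and> 0 < \<rho> \<and>
    (\<lambda>p. K (fst p) (snd p)) \<in> borel_measurable borel \<and>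
    (\<forall>x z. x \<noteq> z \<longrightarrow>
       ennreal c * (if ennreal (norm (x - z)) < \<rho> then 1 else 0)
          / ennreal (norm (x - z) powr (real CARD('n) + 2 * s)) \<le> K x z \<and>
       K x z \<le> ennreal C / ennreal (norm (x - z) powr (real CARD('n) + 2 * s))) \<and>
    C_sharp K < \<infinity> \<and>
    smooth_compact_support u
    \<longrightarrow>
    (\<forall>x. (\<forall>\<epsilon>>0. set_integrable lborel (- ball 0 \<epsilon>)
              (\<lambda>y. (u x - u (x - y)) * enn2real (K x (x - y)))) \<and>
         (\<exists>L. (trunc_op K u x \<longlongrightarrow> L) (at_right 0)) \<and>
         \<bar>Lim (at_right 0) (trunc_op K u x)\<bar>
           \<le> Cn * C2_norm u * (C / (s * (1 - s)) + enn2real (C_sharp K)))"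
proof -
  define V where "V = unit_ball_vol (real CARD('n)) * 2 ^ CARD('n)"
  define Cn where "Cn = 4 * V * ((real CARD('n))^2 + 1) + 1"
  have V: "0 \<le> V" unfolding V_def by simp
  have Cn: "0 < Cn" unfolding Cn_def using V by (simp add: add_nonneg_pos)
  show ?thesis
    apply (rule exI[of _ Cn])
    apply (rule conjI[OF Cn])
    apply (intro allI impI)
    apply (elim conjE)
    subgoal premises H for s K c C \<rho> u x
    proof -
      have Kub: "\<And>x z. x \<noteq> z \<Longrightarrow> K x z \<le> ennreal C / ennreal (norm (x - z) powr (real CARD('n) + 2 * s))"
        using H by blast
      have s1: "1/2 \<le> s" and s2: "s < 1" and C0: "0 < C"
        and Km: "(\<lambda>p. K (fst p) (snd p)) \<in> borel_measurable borel"
        and Cs: "C_sharp K < \<infinity>" and u: "smooth_compact_support u"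
        using H by blast+
      note mx = main_x[where x=x, OF s1 s2 C0 Km Kub Cs u]
      note sf = smooth_facts[OF u]
      define M0 where "M0 = (SUP x. \<bar>u x\<bar>)"
      define D1 where "D1 = (\<Sum>j\<in>UNIV. SUP x. \<bar>partial_deriv j u x\<bar>)"
      define D2 where "D2 = (\<Sum>i\<in>UNIV. \<Sum>j\<in>UNIV. SUP x. \<bar>partial_deriv i (partial_deriv j u) x\<bar>)"
      have M0: "0 \<le> M0" unfolding M0_def by (rule sup_nonneg[OF sf(6)])
      have D1: "0 \<le> D1" unfolding D1_def by (intro sum_nonneg sup_nonneg sf(7))
      have D2: "0 \<le> D2" unfolding D2_def by (intro sum_nonneg sup_nonneg sf(8))
      have C2: "C2_norm u = M0 + D1 + D2" unfolding C2_norm_def M0_def D1_def D2_def ..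
      have fa: "2 * M0 * C * (2 * V) + (real CARD('n))^2 * D2 * C * (2 * V / (1 - s)) + D1 / 2 * enn2real (C_sharp K)
         \<le> Cn * (M0 + D1 + D2) * (C / (s * (1 - s)) + enn2real (C_sharp K))"
        unfolding Cn_def by (rule final_arith[OF M0 D1 D2 _ C0 V _ s1 s2]) simp_all
      have bd: "\<bar>Lim (at_right 0) (trunc_op K u x)\<bar> \<le> Cn * C2_norm u * (C / (s * (1 - s)) + enn2real (C_sharp K))"
        using conjunct2[OF conjunct2[OF mx]] fa unfolding C2 M0_def D1_def D2_def V_def by linarith
      show ?thesis using conjunct1[OF mx] conjunct1[OF conjunct2[OF mx]] bd by blast
    qed
    done
qed

end
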